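(* Let $n\geq 2$ and let $G$ be a group of type $MC(n)$. Then for every homomorphism $\psi$ from $G$ to the group of orientation-preserving $C^2$ diffeomorphisms of a compact interval $I$, the image $\psi(G)$ is abelian.
   Context: A group $G$ is of type $MC(n)$ if it is nonabelian and has a generating set $\{a_i,b_i\}_{i=1}^n\cup\{c_j\}_{j=1}^{n-1}$ satisfying: (1) $a_ia_j=a_ja_i$, $b_ib_j=b_jb_i$, $c_ic_j=c_jc_i$, $a_ic_j=c_ja_i$ for all $i,j$; (2) $a_ib_j=b_ja_i$ if $i\neq j$; (3) $b_ic_j=c_jb_i$ if $j\neq i,i-1$; (4) $a_ib_ia_i=b_ia_ib_i$ for $1\le i\le n$, and $b_ic_jb_i=c_jb_ic_j$ whenever $j=i$ or $j=i-1$. *)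

theory Defs
  imports "HOL-Analysis.Analysis" "HOL-Algebra.Algebra"
begin

definition is_MC_generating :: "('g, 'm) monoid_scheme \<Rightarrow> nat \<Rightarrow>
    (nat \<Rightarrow> 'g) \<Rightarrow> (nat \<Rightarrow> 'g) \<Rightarrow> (nat \<Rightarrow> 'g) \<Rightarrow> bool" where
  "is_MC_generating G n a b c \<longleftrightarrow>
     a ` {1..n} \<subseteq> carrier G \<and> b ` {1..n} \<subseteq> carrier G \<and> c ` {1..n-1} \<subseteq> carrier G \<and>
     generate G (a ` {1..n} \<union> b ` {1..n} \<union> c ` {1..n-1}) = carrier G \<and>
     (\<forall>i\<in>{1..n}. \<forall>j\<in>{1..n}. a i \<otimes>\<^bsub>G\<^esub> a j = a j \<otimes>\<^bsub>G\<^esub> a i) \<and>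
     (\<forall>i\<in>{1..n}. \<forall>j\<in>{1..n}. b i \<otimes>\<^bsub>G\<^esub> b j = b j \<otimes>\<^bsub>G\<^esub> b i) \<and>
     (\<forall>i\<in>{1..n-1}. \<forall>j\<in>{1..n-1}. c i \<otimes>\<^bsub>G\<^esub> c j = c j \<otimes>\<^bsub>G\<^esub> c i) \<and>
     (\<forall>i\<in>{1..n}. \<forall>j\<in>{1..n-1}. a i \<otimes>\<^bsub>G\<^esub> c j = c j \<otimes>\<^bsub>G\<^esub> a i) \<and>
     (\<forall>i\<in>{1..n}. \<forall>j\<in>{1..n}. i \<noteq> j \<longrightarrow> a i \<otimes>\<^bsub>G\<^esub> b j = b j \<otimes>\<^bsub>G\<^esub> a i) \<and>
     (\<forall>i\<in>{1..n}. \<forall>j\<in>{1..n-1}. j \<noteq> i \<and> j \<noteq> i - 1 \<longrightarrow>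
         b i \<otimes>\<^bsub>G\<^esub> c j = c j \<otimes>\<^bsub>G\<^esub> b i) \<and>
     (\<forall>i\<in>{1..n}. a i \<otimes>\<^bsub>G\<^esub> b i \<otimes>\<^bsub>G\<^esub> a i = b i \<otimes>\<^bsub>G\<^esub> a i \<otimes>\<^bsub>G\<^esub> b i) \<and>
     (\<forall>i\<in>{1..n}. \<forall>j\<in>{1..n-1}. (j = i \<or> j = i - 1) \<longrightarrow>
         b i \<otimes>\<^bsub>G\<^esub> c j \<otimes>\<^bsub>G\<^esub> b i = c j \<otimes>\<^bsub>G\<^esub> b i \<otimes>\<^bsub>G\<^esub> c j)"

definition type_MC :: "('g, 'm) monoid_scheme \<Rightarrow> nat \<Rightarrow> bool" where
  "type_MC G n \<longleftrightarrow> group G \<and>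
     (\<exists>x\<in>carrier G. \<exists>y\<in>carrier G. x \<otimes>\<^bsub>G\<^esub> y \<noteq> y \<otimes>\<^bsub>G\<^esub> x) \<and>
     (\<exists>a b c. is_MC_generating G n a b c)"

definition C2_on :: "real set \<Rightarrow> (real \<Rightarrow> real) \<Rightarrow> bool" where
  "C2_on I f \<longleftrightarrow> (\<exists>f' f''. (\<forall>x\<in>I. (f has_real_derivative f' x) (at x within I) \<and>
       (f' has_real_derivative f'' x) (at x within I)) \<and> continuous_on I f'')"

text \<open>Orientation-preserving C^2 diffeomorphisms of [l,r], extended by the identity
  outside [l,r] so that they form a group under composition.\<close>
definition diff2_plus :: "real \<Rightarrow> real \<Rightarrow> (real \<Rightarrow> real) \<Rightarrow> bool" where
  "diff2_plus l r f \<longleftrightarrow> bij_betw f {l..r} {l..r} \<and> strict_mono_on {l..r} f \<and>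
     C2_on {l..r} f \<and> C2_on {l..r} (inv_into {l..r} f) \<and> (\<forall>x. x \<notin> {l..r} \<longrightarrow> f x = x)"

definition Diff2_plus :: "real \<Rightarrow> real \<Rightarrow> (real \<Rightarrow> real) monoid" where
  "Diff2_plus l r = \<lparr>carrier = {f. diff2_plus l r f}, mult = (\<lambda>f g. f \<circ> g), one = id\<rparr>"

end

theory Submission
  imports Defs
begin

definition dv :: "real \<Rightarrow> real \<Rightarrow> (real \<Rightarrow> real) \<Rightarrow> real \<Rightarrow> real" where
  "dv l r f = (SOME f'. (\<forall>x\<in>{l..r}. (f has_real_derivative f' x) (at x within {l..r})) \<and> continuous_on {l..r} f')"

lemma dv_props:
  assumes "diff2_plus l r f"
  shows "\<forall>x\<in>{l..r}. (f has_real_derivative dv l r f x) (at x within {l..r})"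
    and "continuous_on {l..r} (dv l r f)"
proof -
  from assms obtain f' f'' where h: "\<forall>x\<in>{l..r}. (f has_real_derivative f' x) (at x within {l..r}) \<and> (f' has_real_derivative f'' x) (at x within {l..r})"
    unfolding diff2_plus_def C2_on_def by blast
  have "continuous_on {l..r} f'"
    using h by (meson DERIV_continuous continuous_on_eq_continuous_within)
  hence "\<exists>f'. (\<forall>x\<in>{l..r}. (f has_real_derivative f' x) (at x within {l..r})) \<and> continuous_on {l..r} f'" using h by blast
  from someI_ex[OF this] show "\<forall>x\<in>{l..r}. (f has_real_derivative dv l r f x) (at x within {l..r})"
    and "continuous_on {l..r} (dv l r f)" unfolding dv_def by auto
qed

lemma nbot: "l < r \<Longrightarrow> x \<in> {l..r} \<Longrightarrow> at x within {l..r} \<noteq> (bot::real filter)"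
  using trivial_limit_within islimpt_Icc by blast

lemma dv_unique:
  assumes "l < r" "diff2_plus l r f" "x \<in> {l..r}" "(f has_real_derivative a) (at x within {l..r})"
  shows "dv l r f x = a"
  using has_field_derivative_unique[OF _ assms(4) nbot[OF assms(1,3)]] dv_props(1)[OF assms(2)] assms(3) by blast

lemma d2_cont: "diff2_plus l r f \<Longrightarrow> continuous_on {l..r} f"
  using dv_props(1) by (meson DERIV_continuous continuous_on_eq_continuous_within)

lemma d2_img: "diff2_plus l r f \<Longrightarrow> f ` {l..r} = {l..r}"
  unfolding diff2_plus_def bij_betw_def by blast

lemma d2_in: "diff2_plus l r f \<Longrightarrow> x \<in> {l..r} \<Longrightarrow> f x \<in> {l..r}"
  using d2_img by blast

lemma d2_out: "diff2_plus l r f \<Longrightarrow> x \<notin> {l..r} \<Longrightarrow> f x = x"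
  unfolding diff2_plus_def by blast

lemma d2_inj: assumes "diff2_plus l r f" shows "inj f"
proof (rule injI)
  fix x y assume e: "f x = f y"
  have io: "inj_on f {l..r}" using assms unfolding diff2_plus_def bij_betw_def by blast
  show "x = y"
  proof (cases "x \<in> {l..r}"; cases "y \<in> {l..r}")
    assume "x \<in> {l..r}" "y \<in> {l..r}" thus ?thesis using io e by (simp add: inj_on_def)
  next
    assume "x \<in> {l..r}" "y \<notin> {l..r}" thus ?thesis using e d2_in[OF assms] d2_out[OF assms] by metis
  next
    assume "x \<notin> {l..r}" "y \<in> {l..r}" thus ?thesis using e d2_in[OF assms] d2_out[OF assms] by metis
  next
    assume "x \<notin> {l..r}" "y \<notin> {l..r}" thus ?thesis using e d2_out[OF assms] by metis
  qed
qed

lemma d2_chain: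
  assumes "l < r" "diff2_plus l r f" "diff2_plus l r g" "diff2_plus l r (f \<circ> g)" "x \<in> {l..r}"
  shows "dv l r (f \<circ> g) x = dv l r f (g x) * dv l r g x"
proof -
  have "(f has_real_derivative dv l r f (g x)) (at (g x) within (g ` {l..r}))"
    using dv_props(1)[OF assms(2)] d2_img[OF assms(3)] d2_in[OF assms(3) assms(5)] by auto
  from DERIV_image_chain[OF this] dv_props(1)[OF assms(3)] assms(5)
  have "((f \<circ> g) has_real_derivative dv l r f (g x) * dv l r g x) (at x within {l..r})" by blast
  thus ?thesis using dv_unique[OF assms(1,4,5)] by blast
qed

lemma dv_id: assumes "l < r" "diff2_plus l r id" "x \<in> {l..r}" shows "dv l r id x = 1"
  using dv_unique[OF assms] by (simp add: DERIV_ident[unfolded id_def[symmetric]])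

lemma d2_mono: "diff2_plus l r f \<Longrightarrow> strict_mono_on {l..r} f"
  unfolding diff2_plus_def by blast

lemma d2_l: assumes "diff2_plus l r f" "l \<le> r" shows "f l = l"
proof -
  obtain y where y: "y \<in> {l..r}" "f y = l" using d2_img[OF assms(1)] assms(2) by (metis atLeastAtMost_iff image_iff order_refl)
  have "y = l"
  proof (rule ccontr)
    assume "y \<noteq> l" hence "l < y" using y by auto
    hence "f l < f y" using d2_mono[OF assms(1)] y assms(2) by (auto simp: strict_mono_on_def)
    thus False using y d2_in[OF assms(1), of l] assms(2) by auto
  qed
  thus ?thesis using y by simp
qed

lemma dv_nonneg:
  assumes "l < r" "diff2_plus l r f" "x \<in> {l..r}" "x < r"
  shows "dv l r f x \<ge> 0"
proof -
  have d: "(f has_real_derivative dv l r f x) (at x within {x..r})"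
    using dv_props(1)[OF assms(2)] assms(3) DERIV_subset[of f _ x "{l..r}" "{x..r}"] by auto
  hence t: "((\<lambda>y. (f y - f x) / (y - x)) \<longlongrightarrow> dv l r f x) (at_right x)"
    using d unfolding has_field_derivative_iff at_within_Icc_at_right[OF assms(4)] by simp
  have "eventually (\<lambda>y. y \<in> {x<..<r}) (at_right x)"
    using assms(4) eventually_at_right_real by blast
  hence "eventually (\<lambda>y. 0 \<le> (f y - f x) / (y - x)) (at_right x)"
  proof (rule eventually_mono)
    fix y assume "y \<in> {x<..<r}"
    hence "f x < f y" using d2_mono[OF assms(2)] assms(3) by (auto simp: strict_mono_on_def)
    thus "0 \<le> (f y - f x) / (y - x)" using \<open>y \<in> {x<..<r}\<close> by auto
  qed
  thus ?thesis using tendsto_lowerbound[OF t] by simp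
qed

lemma mvt_disp:
  assumes "l < r" "diff2_plus l r f" "a \<in> {l..r}" "b \<in> {l..r}"
  shows "\<exists>\<xi>. min a b \<le> \<xi> \<and> \<xi> \<le> max a b \<and> (f b - b) - (f a - a) = (dv l r f \<xi> - 1) * (b - a)"
proof -
  have gen: "\<exists>\<xi>. a' \<le> \<xi> \<and> \<xi> \<le> b' \<and> (f b' - b') - (f a' - a') = (dv l r f \<xi> - 1) * (b' - a')"
    if ab: "a' < b'" "a' \<in> {l..r}" "b' \<in> {l..r}" for a' b'
  proof -
    have sub: "{a'..b'} \<subseteq> {l..r}" using ab by auto
    have c: "continuous_on {a'..b'} (\<lambda>t. f t - t)"
      using d2_cont[OF assms(2)] sub by (intro continuous_intros) (auto intro: continuous_on_subset)
    have dd: "((\<lambda>t. f t - t) has_real_derivative dv l r f z - 1) (at z)" if "a' < z" "z < b'" for z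
    proof -
      have "z \<in> interior {l..r}" using that ab by auto
      hence "(f has_real_derivative dv l r f z) (at z)"
        using dv_props(1)[OF assms(2)] at_within_interior interior_subset by (metis subsetD)
      thus ?thesis by (auto intro!: derivative_eq_intros)
    qed
    obtain L z where z: "a' < z" "z < b'" "((\<lambda>t. f t - t) has_real_derivative L) (at z)"
       "(f b' - b') - (f a' - a') = (b' - a') * L"
    proof -
      have "\<And>z. a' < z \<Longrightarrow> z < b' \<Longrightarrow> (\<lambda>t. f t - t) differentiable (at z)"
        using dd real_differentiable_def by blast
      from MVT[OF ab(1) c this] show ?thesis using that by blast
    qed
    have "L = dv l r f z - 1" using DERIV_unique[OF z(3) dd[OF z(1,2)]] .
    thus ?thesis using z by (intro exI[of _ z]) auto
  qed
  consider "a < b" | "a = b" | "b < a" by linarith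
  thus ?thesis
  proof cases
    case 1 thus ?thesis using gen[OF 1 assms(3,4)] by auto
  next
    case 2 thus ?thesis by (intro exI[of _ a]) auto
  next
    case 3 obtain \<xi> where "b \<le> \<xi>" "\<xi> \<le> a" "(f a - a) - (f b - b) = (dv l r f \<xi> - 1) * (a - b)"
      using gen[OF 3 assms(4,3)] by auto
    thus ?thesis using 3 by (intro exI[of _ \<xi>]) (auto simp: algebra_simps)
  qed
qed

lemma subseq_multi:
  fixes u :: "'a \<Rightarrow> nat \<Rightarrow> real"
  assumes "finite S" "\<forall>s\<in>S. \<forall>m. \<bar>u s m\<bar> \<le> 1"
  shows "\<exists>\<rho>. strict_mono \<rho> \<and> (\<forall>s\<in>S. convergent (\<lambda>m. u s (\<rho> m)))"
  using assms
proof (induction S rule: finite_induct)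
  case empty
  show ?case by (intro exI[of _ id]) (auto simp: strict_mono_def)
next
  case (insert s T)
  then obtain \<rho>1 where r1: "strict_mono \<rho>1" "\<forall>t\<in>T. convergent (\<lambda>m. u t (\<rho>1 m))" by auto
  have "bounded (range (\<lambda>m. u s (\<rho>1 m)))" unfolding bounded_real using insert.prems by auto
  then obtain L \<rho>2 where r2: "strict_mono \<rho>2" "((\<lambda>m. u s (\<rho>1 m)) \<circ> \<rho>2) \<longlonglongrightarrow> L"
    using bounded_imp_convergent_subsequence by blast
  have "strict_mono (\<rho>1 \<circ> \<rho>2)" using r1 r2 strict_mono_o by blast
  moreover have "\<forall>t\<in>insert s T. convergent (\<lambda>m. u t ((\<rho>1 \<circ> \<rho>2) m))"
  proof
    fix t assume "t \<in> insert s T"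
    then consider "t = s" | "t \<in> T" by auto
    thus "convergent (\<lambda>m. u t ((\<rho>1 \<circ> \<rho>2) m))"
    proof cases
      case 1 thus ?thesis using r2 by (auto simp: convergent_def o_def)
    next
      case 2
      then obtain L' where "(\<lambda>m. u t (\<rho>1 m)) \<longlonglongrightarrow> L'" using r1 by (auto simp: convergent_def)
      from LIMSEQ_subseq_LIMSEQ[OF this r2(1)] show ?thesis by (auto simp: convergent_def o_def)
    qed
  qed
  ultimately show ?case by blast
qed

locale act = group G for G :: "('g, 'm) monoid_scheme" (structure) +
  fixes l r :: real and \<psi> :: "'g \<Rightarrow> real \<Rightarrow> real"
  assumes lr: "l < r" and hom: "\<psi> \<in> hom G (Diff2_plus l r)"
begin

lemma F_d2: "g \<in> carrier G \<Longrightarrow> diff2_plus l r (\<psi> g)"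
  using hom unfolding hom_def Diff2_plus_def by auto

lemma F_mult: "g \<in> carrier G \<Longrightarrow> h \<in> carrier G \<Longrightarrow> \<psi> (g \<otimes> h) = \<psi> g \<circ> \<psi> h"
  using hom unfolding hom_def Diff2_plus_def by auto

lemma F_one: "\<psi> \<one> = id"
proof -
  have "\<psi> \<one> = \<psi> \<one> \<circ> \<psi> \<one>" using F_mult[of \<one> \<one>] by simp
  hence "\<psi> \<one> (\<psi> \<one> x) = \<psi> \<one> x" for x by (metis comp_apply)
  hence "\<psi> \<one> x = x" for x using d2_inj[OF F_d2[of \<one>]] by (simp add: inj_eq)
  thus ?thesis by auto
qed

lemma F_inv1: "g \<in> carrier G \<Longrightarrow> \<psi> (inv g) (\<psi> g x) = x"
  using F_mult[of "inv g" g] F_one by (metis comp_apply id_apply inv_closed l_inv)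

lemma F_inv2: "g \<in> carrier G \<Longrightarrow> \<psi> g (\<psi> (inv g) x) = x"
  using F_mult[of g "inv g"] F_one by (metis comp_apply id_apply inv_closed r_inv)

definition D where "D g = dv l r (\<psi> g)"

lemma D_mult: "g \<in> carrier G \<Longrightarrow> h \<in> carrier G \<Longrightarrow> x \<in> {l..r} \<Longrightarrow> D (g \<otimes> h) x = D g (\<psi> h x) * D h x"
  unfolding D_def using d2_chain[OF lr F_d2 F_d2, of g h x] F_mult[of g h] F_d2[of "g \<otimes> h"] by auto

lemma D_one: "x \<in> {l..r} \<Longrightarrow> D \<one> x = 1"
  unfolding D_def F_one using dv_id[OF lr _] F_d2[of \<one>] F_one by auto

lemma D_nz: assumes "g \<in> carrier G" "x \<in> {l..r}" shows "D g x \<noteq> 0"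
proof -
  have "D (inv g \<otimes> g) x = 1" using assms D_one by simp
  thus ?thesis using D_mult[of "inv g" g x] assms by auto
qed

lemma D_cont: "g \<in> carrier G \<Longrightarrow> continuous_on {l..r} (D g)"
  unfolding D_def using dv_props(2)[OF F_d2] .

lemma F_cont: "g \<in> carrier G \<Longrightarrow> continuous_on {l..r} (\<psi> g)"
  using d2_cont[OF F_d2] .

lemma F_in: "g \<in> carrier G \<Longrightarrow> x \<in> {l..r} \<Longrightarrow> \<psi> g x \<in> {l..r}"
  using d2_in[OF F_d2] .

lemma mvtG: "g \<in> carrier G \<Longrightarrow> a \<in> {l..r} \<Longrightarrow> b \<in> {l..r} \<Longrightarrow>
  \<exists>\<xi>. min a b \<le> \<xi> \<and> \<xi> \<le> max a b \<and> (\<psi> g b - b) - (\<psi> g a - a) = (D g \<xi> - 1) * (b - a)"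
  unfolding D_def using mvt_disp[OF lr F_d2] by blast

end

lemma div_aux1: "(a + c*b + b) / (N::real) = a/N + b/N + c*(b/N)"
proof -
  have "(a + c*b + b)/N = a/N + (c*b)/N + b/N" by (simp add: add_divide_distrib)
  thus ?thesis by simp
qed

lemma div_aux2: "(y - a)/(N*d) = -((a - y)/(N*(d::real)))"
  by (metis minus_diff_eq minus_divide_left)

lemma div_aux3: "(- a / d) / (n::real) = - (a / n) / d"
  by (metis divide_divide_eq_left mult.commute minus_divide_left)

context act begin

lemma seq_comp:
  assumes "g \<in> carrier G" and y: "y \<longlonglongrightarrow> p" "\<forall>m. y m \<in> {l..r}" and p: "p \<in> {l..r}"
  shows "(\<lambda>m. \<psi> g (y m)) \<longlonglongrightarrow> \<psi> g p"
  using continuous_on_tendsto_compose[OF F_cont[OF assms(1)] y(1) p] y(2) by simp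

lemma seq_compD:
  assumes "g \<in> carrier G" and y: "y \<longlonglongrightarrow> p" "\<forall>m. y m \<in> {l..r}" and p: "p \<in> {l..r}"
  shows "(\<lambda>m. D g (y m)) \<longlonglongrightarrow> D g p"
  using continuous_on_tendsto_compose[OF D_cont[OF assms(1)] y(1) p] y(2) by simp

lemma between_lim:
  fixes a b \<xi> :: "nat \<Rightarrow> real"
  assumes "a \<longlonglongrightarrow> p" "b \<longlonglongrightarrow> p" "\<forall>m. min (a m) (b m) \<le> \<xi> m \<and> \<xi> m \<le> max (a m) (b m)"
  shows "\<xi> \<longlonglongrightarrow> p"
proof (rule tendsto_sandwich[of "\<lambda>m. min (a m) (b m)" _ _ "\<lambda>m. max (a m) (b m)"])
  show "\<forall>\<^sub>F n in sequentially. min (a n) (b n) \<le> \<xi> n" using assms(3) by simp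
  show "\<forall>\<^sub>F n in sequentially. \<xi> n \<le> max (a n) (b n)" using assms(3) by simp
  show "(\<lambda>m. min (a m) (b m)) \<longlonglongrightarrow> p" using tendsto_min[OF assms(1,2)] by simp
  show "(\<lambda>m. max (a m) (b m)) \<longlonglongrightarrow> p" using tendsto_max[OF assms(1,2)] by simp
qed

lemma Q_comp:
  fixes y N :: "nat \<Rightarrow> real"
  assumes g: "g \<in> carrier G" and h: "h \<in> carrier G" and gp: "\<psi> g p = p" and hp: "\<psi> h p = p"
    and Dg: "D g p = 1" and p: "p \<in> {l..r}" and y: "y \<longlonglongrightarrow> p" "\<forall>m. y m \<in> {l..r}"
    and a: "(\<lambda>m. (\<psi> g (y m) - y m) / N m) \<longlonglongrightarrow> a"
    and b: "(\<lambda>m. (\<psi> h (y m) - y m) / N m) \<longlonglongrightarrow> b"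
  shows "(\<lambda>m. (\<psi> (g \<otimes> h) (y m) - y m) / N m) \<longlonglongrightarrow> a + b"
proof -
  define w where "w m = \<psi> h (y m)" for m
  have w: "\<forall>m. w m \<in> {l..r}" using F_in[OF h] y(2) by (simp add: w_def)
  have "w = (\<lambda>m. \<psi> h (y m))" by (rule ext) (simp add: w_def)
  hence wl: "w \<longlonglongrightarrow> p" using seq_comp[OF h y p] hp by simp
  have "\<forall>m. \<exists>\<xi>. min (y m) (w m) \<le> \<xi> \<and> \<xi> \<le> max (y m) (w m) \<and>
     (\<psi> g (w m) - w m) - (\<psi> g (y m) - y m) = (D g \<xi> - 1) * (w m - y m)"
    using mvtG[OF g] y(2) w by blast
  then obtain \<xi> where xi: "\<forall>m. min (y m) (w m) \<le> \<xi> m \<and> \<xi> m \<le> max (y m) (w m) \<and>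
     (\<psi> g (w m) - w m) - (\<psi> g (y m) - y m) = (D g (\<xi> m) - 1) * (w m - y m)"
    by metis
  have xil: "\<xi> \<longlonglongrightarrow> p" using between_lim[OF y(1) wl] xi by blast
  have xin: "\<forall>m. \<xi> m \<in> {l..r}"
  proof
    fix m show "\<xi> m \<in> {l..r}" using xi[rule_format, of m] y(2)[rule_format, of m] w[rule_format, of m]
      by (auto simp: min_def max_def split: if_splits)
  qed
  have Dl: "(\<lambda>m. D g (\<xi> m)) \<longlonglongrightarrow> 1" using seq_compD[OF g xil xin p] Dg by simp
  have eq: "(\<psi> (g \<otimes> h) (y m) - y m) / N m =
     (\<psi> g (y m) - y m) / N m + (\<psi> h (y m) - y m) / N m + (D g (\<xi> m) - 1) * ((\<psi> h (y m) - y m) / N m)" for m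
  proof -
    have "\<psi> (g \<otimes> h) (y m) - y m = (\<psi> g (w m) - w m) + (w m - y m)"
      using F_mult[OF g h] by (simp add: w_def)
    also have "\<dots> = (\<psi> g (y m) - y m) + (D g (\<xi> m) - 1) * (w m - y m) + (w m - y m)"
      using xi by (metis add_diff_cancel_left' diff_add_cancel)
    finally have E: "\<psi> (g \<otimes> h) (y m) - y m = (\<psi> g (y m) - y m) + (D g (\<xi> m) - 1) * (\<psi> h (y m) - y m) + (\<psi> h (y m) - y m)"
      by (simp add: w_def)
    show ?thesis unfolding E by (rule div_aux1)
  qed
  have "(\<lambda>m. (\<psi> g (y m) - y m) / N m + (\<psi> h (y m) - y m) / N m + (D g (\<xi> m) - 1) * ((\<psi> h (y m) - y m) / N m))
        \<longlonglongrightarrow> a + b + (1 - 1) * b"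
    by (intro tendsto_intros a b Dl)
  thus ?thesis unfolding eq by simp
qed

lemma Q_inv:
  fixes y N :: "nat \<Rightarrow> real"
  assumes s: "s \<in> carrier G" and sp: "\<psi> s p = p" and Ds: "D s p = 1" and p: "p \<in> {l..r}"
    and y: "y \<longlonglongrightarrow> p" "\<forall>m. y m \<in> {l..r}"
    and a: "(\<lambda>m. (\<psi> s (y m) - y m) / N m) \<longlonglongrightarrow> a"
  shows "(\<lambda>m. (\<psi> (inv s) (y m) - y m) / N m) \<longlonglongrightarrow> - a"
proof -
  have is_: "inv s \<in> carrier G" using s by simp
  define z where "z m = \<psi> (inv s) (y m)" for m
  have z: "\<forall>m. z m \<in> {l..r}" using F_in[OF is_] y(2) by (simp add: z_def)
  have isp: "\<psi> (inv s) p = p" using F_inv1[OF s, of p] sp by simp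
  have "z = (\<lambda>m. \<psi> (inv s) (y m))" by (rule ext) (simp add: z_def)
  hence zl: "z \<longlonglongrightarrow> p" using seq_comp[OF is_ y p] isp by simp
  have sz: "\<psi> s (z m) = y m" for m using F_inv2[OF s] by (simp add: z_def)
  have "\<forall>m. \<exists>\<xi>. min (z m) (y m) \<le> \<xi> \<and> \<xi> \<le> max (z m) (y m) \<and>
     (\<psi> s (y m) - y m) - (\<psi> s (z m) - z m) = (D s \<xi> - 1) * (y m - z m)"
    using mvtG[OF s] y(2) z by blast
  then obtain \<xi> where xi: "\<forall>m. min (z m) (y m) \<le> \<xi> m \<and> \<xi> m \<le> max (z m) (y m) \<and>
     (\<psi> s (y m) - y m) - (\<psi> s (z m) - z m) = (D s (\<xi> m) - 1) * (y m - z m)"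
    by metis
  have xil: "\<xi> \<longlonglongrightarrow> p" using between_lim[OF zl y(1)] xi by blast
  have xin: "\<forall>m. \<xi> m \<in> {l..r}"
  proof
    fix m show "\<xi> m \<in> {l..r}" using xi[rule_format, of m] y(2)[rule_format, of m] z[rule_format, of m]
      by (auto simp: min_def max_def split: if_splits)
  qed
  have Dl: "(\<lambda>m. D s (\<xi> m)) \<longlonglongrightarrow> 1" using seq_compD[OF s xil xin p] Ds by simp
  have eq: "(\<psi> (inv s) (y m) - y m) / N m = - ((\<psi> s (y m) - y m) / N m) / D s (\<xi> m)" for m
  proof -
    have nz: "D s (\<xi> m) \<noteq> 0" using D_nz[OF s] xin by blast
    have "\<psi> s (y m) - y m = D s (\<xi> m) * (y m - z m)"
      using xi[rule_format, of m] sz[of m] by (simp add: algebra_simps)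
    hence "z m - y m = - (\<psi> s (y m) - y m) / D s (\<xi> m)" using nz by (simp add: field_simps)
    hence "(\<psi> (inv s) (y m) - y m) / N m = (- (\<psi> s (y m) - y m) / D s (\<xi> m)) / N m" by (simp add: z_def)
    thus ?thesis by (simp only: div_aux3)
  qed
  have "(\<lambda>m. - ((\<psi> s (y m) - y m) / N m) / D s (\<xi> m)) \<longlonglongrightarrow> - a / 1"
    by (intro tendsto_intros a Dl) simp
  thus ?thesis unfolding eq by simp
qed


lemma thurston:
  assumes fin: "finite S" and Sc: "S \<subseteq> carrier G"
    and hyp: "\<And>\<Phi>. (\<forall>g\<in>generate G S. \<forall>h\<in>generate G S. \<Phi> (g \<otimes> h) = \<Phi> g + \<Phi> h) \<Longrightarrow> \<forall>s\<in>S. \<Phi> s = (0::real)"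
  shows "\<forall>s\<in>S. \<psi> s = id"
proof (rule ccontr)
  assume "\<not> ?thesis"
  then obtain s0 q where s0: "s0 \<in> S" "\<psi> s0 q \<noteq> q" by (auto simp: fun_eq_iff)
  have q: "q \<in> {l..r}" using d2_out[OF F_d2[of s0]] s0 Sc by blast
  define K where "K = generate G S"
  have Kc: "K \<subseteq> carrier G" using generate_incl[OF Sc] K_def by simp
  define Z where "Z = {x \<in> {l..q}. \<forall>s\<in>S. \<psi> s x = x}"
  have Zeq: "Z = {l..q} \<inter> (\<Inter>s\<in>S. {l..r} \<inter> (\<lambda>x. \<psi> s x - x) -` {0})" using q by (auto simp: Z_def)
  have cs: "closed ({l..r} \<inter> (\<lambda>x. \<psi> s x - x) -` {0})" if "s \<in> S" for s
  proof (rule continuous_closed_preimage)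
    show "continuous_on {l..r} (\<lambda>x. \<psi> s x - x)" using F_cont Sc that by (auto intro!: continuous_intros)
  qed auto
  have cl: "closed Z" unfolding Zeq using cs by (intro closed_Int closed_INT) auto
  have lZ: "l \<in> Z" using d2_l[OF F_d2] lr q Sc by (auto simp: Z_def)
  have bdd: "bdd_above Z" by (auto simp: Z_def bdd_above_def)
  define p where "p = Sup Z"
  have pZ: "p \<in> Z" using closed_contains_Sup[of Z] lZ bdd cl p_def by auto
  have "q \<notin> Z" using s0 by (auto simp: Z_def)
  hence "p \<noteq> q" using pZ by metis
  hence pq: "p < q" using pZ by (auto simp: Z_def)
  have pI: "p \<in> {l..r}" "p < r" using pZ pq q by (auto simp: Z_def)
  have nfix: "\<exists>s\<in>S. \<psi> s x \<noteq> x" if "p < x" "x \<le> q" for x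
  proof (rule ccontr)
    assume "\<not> ?thesis"
    hence "x \<in> Z" using that pI by (auto simp: Z_def)
    hence "x \<le> p" using cSup_upper[OF _ bdd] p_def by simp
    thus False using that by simp
  qed
  have Kfix: "\<psi> g p = p" if "g \<in> K" for g
    using that unfolding K_def
  proof (induction rule: generate.induct)
    case one thus ?case using F_one by simp
  next
    case (incl h) thus ?case using pZ by (auto simp: Z_def)
  next
    case (inv h)
    hence "\<psi> h p = p" using pZ by (auto simp: Z_def)
    thus ?case using F_inv1[of h p] inv Sc by auto
  next
    case (eng h1 h2)
    hence "h1 \<in> carrier G" "h2 \<in> carrier G" using Kc K_def by auto
    thus ?case using F_mult[of h1 h2] eng.IH by simp
  qed
  have Ds1: "\<forall>s\<in>S. D s p = 1"
  proof -
    define \<Phi> where "\<Phi> g = ln \<bar>D g p\<bar>" for g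
    have "\<forall>g\<in>K. \<forall>h\<in>K. \<Phi> (g \<otimes> h) = \<Phi> g + \<Phi> h"
    proof (intro ballI)
      fix g h assume gh: "g \<in> K" "h \<in> K"
      have "D (g \<otimes> h) p = D g p * D h p" using D_mult[of g h p] gh Kc Kfix pI by auto
      moreover have "D g p \<noteq> 0" "D h p \<noteq> 0" using D_nz gh Kc pI by auto
      ultimately show "\<Phi> (g \<otimes> h) = \<Phi> g + \<Phi> h" by (simp add: \<Phi>_def abs_mult ln_mult)
    qed
    hence z: "\<forall>s\<in>S. \<Phi> s = 0" using hyp[of \<Phi>] K_def by simp
    show ?thesis
    proof
      fix s assume s: "s \<in> S"
      have nz: "D s p \<noteq> 0" using D_nz s Sc pI by auto
      have "ln \<bar>D s p\<bar> = 0" using z s by (simp add: \<Phi>_def)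
      hence "\<bar>D s p\<bar> = 1" using nz by simp
      moreover have "D s p \<ge> 0" unfolding D_def using dv_nonneg[OF lr F_d2 pI] s Sc by auto
      ultimately show "D s p = 1" by simp
    qed
  qed
  have DK: "D g p = 1" if "g \<in> K" for g
    using that unfolding K_def
  proof (induction rule: generate.induct)
    case one thus ?case using D_one pI by simp
  next
    case (incl h) thus ?case using Ds1 by auto
  next
    case (inv h)
    have hc: "h \<in> carrier G" using inv Sc by auto
    have hp: "\<psi> h p = p" using inv pZ by (auto simp: Z_def)
    have "D (inv h \<otimes> h) p = 1" using D_one pI hc by simp
    thus ?case using D_mult[of "inv h" h p] hc hp pI Ds1 inv by auto
  next
    case (eng h1 h2)
    hence "h1 \<in> carrier G" "h2 \<in> carrier G" "h2 \<in> K" using Kc K_def by auto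
    thus ?case using D_mult[of h1 h2 p] Kfix[of h2] pI eng.IH by simp
  qed
  define x where "x m = p + (q - p) * inverse (real (Suc m))" for m
  have xI: "p < x m \<and> x m \<le> q" for m
  proof -
    have "0 < inverse (real (Suc m))" by simp
    moreover have "inverse (real (Suc m)) \<le> 1" using le_imp_inverse_le[of 1 "real (Suc m)"] by simp
    ultimately have "0 < inverse (real (Suc m))" "inverse (real (Suc m)) \<le> 1" by auto
    hence "0 < (q - p) * inverse (real (Suc m))" "(q - p) * inverse (real (Suc m)) \<le> (q - p)"
      using pq by (auto simp: mult_le_cancel_left1)
    thus ?thesis by (simp add: x_def)
  qed
  have xl: "x \<longlonglongrightarrow> p"
  proof -
    have "(\<lambda>m. p + (q - p) * inverse (real (Suc m))) \<longlonglongrightarrow> p + (q - p) * 0"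
      by (intro tendsto_intros LIMSEQ_inverse_real_of_nat)
    thus ?thesis by (simp add: x_def[abs_def])
  qed
  define M where "M m = (\<Sum>s\<in>S. \<bar>\<psi> s (x m) - x m\<bar>)" for m
  have Mge: "\<bar>\<psi> s (x m) - x m\<bar> \<le> M m" if "s \<in> S" for s m
    unfolding M_def using member_le_sum[OF that _ fin, of "\<lambda>s. \<bar>\<psi> s (x m) - x m\<bar>"] by simp
  have Mpos: "M m > 0" for m
  proof -
    obtain s where "s \<in> S" "\<psi> s (x m) \<noteq> x m" using nfix xI by blast
    hence "\<bar>\<psi> s (x m) - x m\<bar> > 0" "\<bar>\<psi> s (x m) - x m\<bar> \<le> M m" using Mge[of s m] by auto
    thus ?thesis by linarith
  qed
  define u where "u s m = (\<psi> s (x m) - x m) / M m" for s m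
  have "\<forall>s\<in>S. \<forall>m. \<bar>u s m\<bar> \<le> 1"
  proof (intro ballI allI)
    fix s m assume s: "s \<in> S"
    have "\<bar>\<psi> s (x m) - x m\<bar> \<le> M m" "M m > 0" using Mge[OF s] Mpos by auto
    thus "\<bar>u s m\<bar> \<le> 1" by (simp add: u_def abs_divide divide_le_eq_1_pos)
  qed
  from subseq_multi[OF fin this] obtain \<rho> where rho: "strict_mono \<rho>" "\<forall>s\<in>S. convergent (\<lambda>m. u s (\<rho> m))"
    by blast
  define y where "y m = x (\<rho> m)" for m
  define N where "N m = M (\<rho> m)" for m
  have yl: "y \<longlonglongrightarrow> p" using LIMSEQ_subseq_LIMSEQ[OF xl rho(1)] by (simp add: y_def[abs_def] o_def)
  have yI: "\<forall>m. y m \<in> {l..r}"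
  proof
    fix m
    have "p < x (\<rho> m)" "x (\<rho> m) \<le> q" using xI by auto
    thus "y m \<in> {l..r}" using pI q by (simp add: y_def)
  qed
  define Q where "Q g = (\<lambda>m. (\<psi> g (y m) - y m) / N m)" for g
  have QS: "convergent (Q s)" if "s \<in> S" for s
    using rho(2) that by (simp add: Q_def u_def y_def N_def)
  have Qconv: "convergent (Q g)" if "g \<in> K" for g
    using that unfolding K_def
  proof (induction rule: generate.induct)
    case one
    have "Q \<one> = (\<lambda>m. 0)" using F_one by (simp add: Q_def)
    thus ?case by (simp add: convergent_const)
  next
    case (incl h) thus ?case using QS by auto
  next
    case (inv h)
    have hc: "h \<in> carrier G" using inv Sc by auto
    have hp: "\<psi> h p = p" using inv pZ by (auto simp: Z_def)
    have "Q h \<longlonglongrightarrow> lim (Q h)" using QS[OF inv] convergent_LIMSEQ_iff by blast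
    from Q_inv[OF hc hp _ pI(1) yl yI this[unfolded Q_def]] Ds1 inv
    show ?case by (auto simp: Q_def convergent_def)
  next
    case (eng h1 h2)
    have c: "h1 \<in> carrier G" "h2 \<in> carrier G" using eng Kc K_def by auto
    have "Q h1 \<longlonglongrightarrow> lim (Q h1)" "Q h2 \<longlonglongrightarrow> lim (Q h2)" using eng convergent_LIMSEQ_iff by blast+
    from Q_comp[OF c Kfix Kfix DK pI(1) yl yI this[unfolded Q_def]] eng K_def
    show ?case by (auto simp: Q_def convergent_def)
  qed
  define \<Phi> where "\<Phi> g = lim (Q g)" for g
  have "\<forall>g\<in>K. \<forall>h\<in>K. \<Phi> (g \<otimes> h) = \<Phi> g + \<Phi> h"
  proof (intro ballI)
    fix g h assume gh: "g \<in> K" "h \<in> K"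
    have c: "g \<in> carrier G" "h \<in> carrier G" using gh Kc by auto
    have "Q g \<longlonglongrightarrow> lim (Q g)" "Q h \<longlonglongrightarrow> lim (Q h)" using Qconv gh convergent_LIMSEQ_iff by blast+
    from Q_comp[OF c Kfix[OF gh(1)] Kfix[OF gh(2)] DK[OF gh(1)] pI(1) yl yI this[unfolded Q_def]]
    have "Q (g \<otimes> h) \<longlonglongrightarrow> \<Phi> g + \<Phi> h" by (simp add: Q_def \<Phi>_def)
    thus "\<Phi> (g \<otimes> h) = \<Phi> g + \<Phi> h" by (simp add: \<Phi>_def limI)
  qed
  hence P0: "\<forall>s\<in>S. \<Phi> s = 0" using hyp[of \<Phi>] K_def by simp
  have Q0: "\<forall>s\<in>S. Q s \<longlonglongrightarrow> 0"
  proof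
    fix s assume s: "s \<in> S"
    have "Q s \<longlonglongrightarrow> lim (Q s)" using QS[OF s] convergent_LIMSEQ_iff by blast
    moreover have "lim (Q s) = 0" using P0 s by (simp add: \<Phi>_def)
    ultimately show "Q s \<longlonglongrightarrow> 0" by simp
  qed
  have "(\<lambda>m. \<Sum>s\<in>S. \<bar>Q s m\<bar>) \<longlonglongrightarrow> (\<Sum>s\<in>S. \<bar>0\<bar>)"
    using Q0 by (intro tendsto_intros) auto
  moreover have "(\<lambda>m. \<Sum>s\<in>S. \<bar>Q s m\<bar>) = (\<lambda>m. 1)"
  proof
    fix m
    have "(\<Sum>s\<in>S. \<bar>Q s m\<bar>) = (\<Sum>s\<in>S. \<bar>\<psi> s (y m) - y m\<bar>) / N m"
      using Mpos[of "\<rho> m"] by (simp add: Q_def N_def abs_divide sum_divide_distrib)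
    also have "\<dots> = 1" using Mpos[of "\<rho> m"] by (simp add: M_def N_def y_def)
    finally show "(\<Sum>s\<in>S. \<bar>Q s m\<bar>) = 1" .
  qed
  ultimately have "(\<lambda>m. 1::real) \<longlonglongrightarrow> 0" by simp
  thus False by (simp add: LIMSEQ_const_iff)
qed

end

context group begin

lemma inv_left_cancel: "x \<in> carrier G \<Longrightarrow> y \<in> carrier G \<Longrightarrow> inv x \<otimes> (x \<otimes> y) = y"
  by (simp add: m_assoc[symmetric])

lemma comm_inv: assumes "x \<in> carrier G" "z \<in> carrier G" "x \<otimes> z = z \<otimes> x"
  shows "x \<otimes> inv z = inv z \<otimes> x"
proof -
  have 1: "inv z \<otimes> (x \<otimes> z) \<otimes> inv z = inv z \<otimes> x" using assms(1,2) by (simp only: m_assoc inv_closed m_closed r_inv r_one)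
  have 2: "inv z \<otimes> (z \<otimes> x) \<otimes> inv z = x \<otimes> inv z" using assms(1,2) by (simp only: inv_left_cancel inv_closed m_closed)
  show ?thesis using 1 2 assms(3) by metis
qed

lemma lcomm: assumes "x \<in> carrier G" "w \<in> carrier G" "t \<in> carrier G" "x \<otimes> w = w \<otimes> x"
  shows "x \<otimes> (w \<otimes> t) = w \<otimes> (x \<otimes> t)"
  using assms by (simp add: m_assoc[symmetric])

lemma braid_shift:
  assumes c: "x \<in> carrier G" "y \<in> carrier G" "z \<in> carrier G"
    and b: "x \<otimes> y \<otimes> x = y \<otimes> x \<otimes> y" and xz: "x \<otimes> z = z \<otimes> x" and yz: "y \<otimes> z = z \<otimes> y"
  shows "(x \<otimes> inv z) \<otimes> (y \<otimes> inv z) \<otimes> (x \<otimes> inv z) = (y \<otimes> inv z) \<otimes> (x \<otimes> inv z) \<otimes> (y \<otimes> inv z)"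
proof -
  have w: "inv z \<in> carrier G" using c by simp
  have xw: "x \<otimes> inv z = inv z \<otimes> x" using comm_inv c xz by blast
  have yw: "y \<otimes> inv z = inv z \<otimes> y" using comm_inv c yz by blast
  have xw': "x \<otimes> (inv z \<otimes> t) = inv z \<otimes> (x \<otimes> t)" if "t \<in> carrier G" for t using lcomm[OF c(1) w that xw] .
  have yw': "y \<otimes> (inv z \<otimes> t) = inv z \<otimes> (y \<otimes> t)" if "t \<in> carrier G" for t using lcomm[OF c(2) w that yw] .
  have b': "x \<otimes> (y \<otimes> x) = y \<otimes> (x \<otimes> y)" using b c by (simp add: m_assoc)
  show ?thesis using c w by (simp add: m_assoc xw yw xw' yw' b')
qed

lemma prod_cancel: "a \<in> carrier G \<Longrightarrow> b \<in> carrier G \<Longrightarrow> c \<in> carrier G \<Longrightarrow>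
   (a \<otimes> inv b) \<otimes> (b \<otimes> inv c) = a \<otimes> inv c"
  by (simp add: m_assoc inv_left_cancel)

end

context act begin

lemma eq_from_id: assumes "u \<in> carrier G" "v \<in> carrier G" "\<psi> (u \<otimes> inv v) = id"
  shows "\<psi> u = \<psi> v"
proof -
  have "u = (u \<otimes> inv v) \<otimes> v" using assms by (simp add: m_assoc)
  hence "\<psi> u = \<psi> (u \<otimes> inv v) \<circ> \<psi> v" using F_mult[of "u \<otimes> inv v" v] assms by simp
  thus ?thesis using assms(3) by simp
qed

lemma chain5:
  assumes c: "x1 \<in> carrier G" "x2 \<in> carrier G" "x3 \<in> carrier G" "x4 \<in> carrier G" "x5 \<in> carrier G"
    and b12: "x1 \<otimes> x2 \<otimes> x1 = x2 \<otimes> x1 \<otimes> x2"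
    and b23: "x2 \<otimes> x3 \<otimes> x2 = x3 \<otimes> x2 \<otimes> x3"
    and b34: "x3 \<otimes> x4 \<otimes> x3 = x4 \<otimes> x3 \<otimes> x4"
    and b45: "x4 \<otimes> x5 \<otimes> x4 = x5 \<otimes> x4 \<otimes> x5"
    and c13: "x1 \<otimes> x3 = x3 \<otimes> x1" and c14: "x1 \<otimes> x4 = x4 \<otimes> x1" and c15: "x1 \<otimes> x5 = x5 \<otimes> x1"
    and c24: "x2 \<otimes> x4 = x4 \<otimes> x2" and c25: "x2 \<otimes> x5 = x5 \<otimes> x2" and c35: "x3 \<otimes> x5 = x5 \<otimes> x3"
  shows "\<psi> x1 = \<psi> x2 \<and> \<psi> x2 = \<psi> x3 \<and> \<psi> x3 = \<psi> x4 \<and> \<psi> x4 = \<psi> x5"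
proof -
  define XS where "XS = {x1, x2, x3, x4, x5}"
  have Xc: "XS \<subseteq> carrier G" using c by (auto simp: XS_def)
  define S where "S = (\<lambda>(u, v). u \<otimes> inv v) ` (XS \<times> XS)"
  have fin: "finite S" by (simp add: S_def XS_def)
  have Sc: "S \<subseteq> carrier G" using Xc by (auto simp: S_def)
  have ES: "u \<otimes> inv v \<in> S" if "u \<in> XS" "v \<in> XS" for u v using that by (force simp: S_def)
  have hyp: "\<forall>s\<in>S. \<Phi> s = 0"
    if add: "\<forall>g\<in>generate G S. \<forall>h\<in>generate G S. \<Phi> (g \<otimes> h) = \<Phi> g + \<Phi> h" for \<Phi> :: "'g \<Rightarrow> real"
  proof -
    define K where "K = generate G S"
    have sg: "subgroup K G" using generate_is_subgroup[OF Sc] K_def by simp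
    have EK: "u \<otimes> inv v \<in> K" if "u \<in> XS" "v \<in> XS" for u v
      using ES[OF that] K_def generate.incl by metis
    define \<phi> where "\<phi> u v = \<Phi> (u \<otimes> inv v)" for u v
    have addK: "\<forall>g\<in>K. \<forall>h\<in>K. \<Phi> (g \<otimes> h) = \<Phi> g + \<Phi> h" using add K_def by simp
    have one: "\<Phi> \<one> = 0"
    proof -
      have "\<one> \<in> K" using sg subgroup.one_closed by blast
      hence "\<Phi> (\<one> \<otimes> \<one>) = \<Phi> \<one> + \<Phi> \<one>" using add K_def by blast
      thus ?thesis by simp
    qed
    have T: "\<phi> u v + \<phi> v w = \<phi> u w" if "u \<in> XS" "v \<in> XS" "w \<in> XS" for u v w
    proof -
      have "\<Phi> ((u \<otimes> inv v) \<otimes> (v \<otimes> inv w)) = \<phi> u v + \<phi> v w"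
        using add EK that K_def by (simp add: \<phi>_def)
      moreover have "u \<in> carrier G" "v \<in> carrier G" "w \<in> carrier G" using Xc that by auto
      ultimately show ?thesis using prod_cancel[of u v w] by (simp add: \<phi>_def)
    qed
    have R: "\<phi> u u = 0" if "u \<in> XS" for u using one that Xc by (auto simp: \<phi>_def)
    have Q: "\<phi> u w = \<phi> v w" if XS: "u \<in> XS" "v \<in> XS" "w \<in> XS"
      and br: "u \<otimes> v \<otimes> u = v \<otimes> u \<otimes> v" and uw: "u \<otimes> w = w \<otimes> u" and vw: "v \<otimes> w = w \<otimes> v" for u v w
    proof -
      have cc: "u \<in> carrier G" "v \<in> carrier G" "w \<in> carrier G" using XS Xc by auto
      define g where "g = u \<otimes> inv w"
      define h where "h = v \<otimes> inv w"
      have gK: "g \<in> K" "h \<in> K" unfolding g_def h_def using EK[OF XS(1) XS(3)] EK[OF XS(2) XS(3)] by auto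
      have ghK: "g \<otimes> h \<in> K" "h \<otimes> g \<in> K"
        using subgroup.m_closed[OF sg gK(1) gK(2)] subgroup.m_closed[OF sg gK(2) gK(1)] by auto
      have eq: "g \<otimes> h \<otimes> g = h \<otimes> g \<otimes> h" unfolding g_def h_def using braid_shift[OF cc br uw vw] .
      have "\<Phi> (g \<otimes> h \<otimes> g) = \<Phi> g + \<Phi> h + \<Phi> g" using addK[rule_format, OF ghK(1) gK(1)] addK[rule_format, OF gK(1) gK(2)] by simp
      moreover have "\<Phi> (h \<otimes> g \<otimes> h) = \<Phi> h + \<Phi> g + \<Phi> h" using addK[rule_format, OF ghK(2) gK(2)] addK[rule_format, OF gK(2) gK(1)] by simp
      ultimately have "\<Phi> g = \<Phi> h" using eq by simp
      thus ?thesis by (simp add: \<phi>_def g_def h_def)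
    qed
    have XS5: "x1 \<in> XS" "x2 \<in> XS" "x3 \<in> XS" "x4 \<in> XS" "x5 \<in> XS" by (auto simp: XS_def)
    have q1: "\<phi> x1 x4 = \<phi> x2 x4" using Q[OF XS5(1,2,4) b12 c14 c24] .
    have q2: "\<phi> x2 x5 = \<phi> x3 x5" using Q[OF XS5(2,3,5) b23 c25 c35] .
    have q3: "\<phi> x3 x1 = \<phi> x4 x1" using Q[OF XS5(3,4,1) b34 c13[symmetric] c14[symmetric]] .
    have q4: "\<phi> x4 x1 = \<phi> x5 x1" using Q[OF XS5(4,5,1) b45 c14[symmetric] c15[symmetric]] .
    have z12: "\<phi> x1 x2 = 0" using T[OF XS5(1,4,2)] T[OF XS5(2,4,2)] R[OF XS5(2)] q1 by linarith
    have z23: "\<phi> x2 x3 = 0" using T[OF XS5(2,5,3)] T[OF XS5(3,5,3)] R[OF XS5(3)] q2 by linarith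
    have z34: "\<phi> x3 x4 = 0" using T[OF XS5(3,1,4)] T[OF XS5(4,1,4)] R[OF XS5(4)] q3 by linarith
    have z45: "\<phi> x4 x5 = 0" using T[OF XS5(4,1,5)] T[OF XS5(5,1,5)] R[OF XS5(5)] q4 by linarith
    have u1: "\<phi> u x1 = 0" if "u \<in> XS" for u
    proof -
      have "u = x1 \<or> u = x2 \<or> u = x3 \<or> u = x4 \<or> u = x5" using that by (auto simp: XS_def)
      thus ?thesis
        using R[OF XS5(1)] T[OF XS5(1,2,1)] T[OF XS5(3,2,1)] T[OF XS5(2,3,2)] T[OF XS5(4,3,1)] T[OF XS5(3,4,3)]
          T[OF XS5(5,4,1)] T[OF XS5(4,5,4)] R[OF XS5(2)] R[OF XS5(3)] R[OF XS5(4)] z12 z23 z34 z45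
        by (elim disjE; hypsubst; linarith)
    qed
    show ?thesis
    proof
      fix s assume "s \<in> S"
      then obtain u v where uv: "u \<in> XS" "v \<in> XS" "s = u \<otimes> inv v" by (auto simp: S_def)
      have "\<phi> u v = 0" using T[OF uv(1) XS5(1) uv(2)] T[OF uv(2) XS5(1) uv(2)] R[OF uv(2)] u1[OF uv(1)] u1[OF uv(2)]
        by linarith
      thus "\<Phi> s = 0" using uv by (simp add: \<phi>_def)
    qed
  qed
  have all: "\<forall>s\<in>S. \<psi> s = id" using thurston[OF fin Sc] hyp by blast
  have "\<psi> (u \<otimes> inv v) = id" if "u \<in> XS" "v \<in> XS" for u v using all ES[OF that] by blast
  hence "\<psi> u = \<psi> v" if "u \<in> XS" "v \<in> XS" for u v using eq_from_id that Xc by blast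
  thus ?thesis by (simp add: XS_def)
qed

end

theorem theorem3p11:
  fixes G :: "('g, 'm) monoid_scheme" and n :: nat and l r :: real and \<psi> :: "'g \<Rightarrow> real \<Rightarrow> real"
  assumes "n \<ge> 2" and "type_MC G n" and "l < r"
    and "\<psi> \<in> hom G (Diff2_plus l r)"
  shows "\<forall>f\<in>\<psi> ` carrier G. \<forall>g\<in>\<psi> ` carrier G. f \<circ> g = g \<circ> f"
proof -
  from assms(2) have grp: "group G" and "\<exists>a b c. is_MC_generating G n a b c" unfolding type_MC_def by auto
  then obtain a b c where mc: "is_MC_generating G n a b c" by blast
  have "act G l r \<psi>" unfolding act_def act_axioms_def using grp assms(3,4) by auto
  then interpret act G l r \<psi> .
  have ac: "\<And>i. i \<in> {1..n} \<Longrightarrow> a i \<in> carrier G" and bc: "\<And>i. i \<in> {1..n} \<Longrightarrow> b i \<in> carrier G"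
    and cc: "\<And>i. i \<in> {1..n-1} \<Longrightarrow> c i \<in> carrier G"
    and gen: "generate G (a ` {1..n} \<union> b ` {1..n} \<union> c ` {1..n-1}) = carrier G"
    and aa: "\<And>i j. i\<in>{1..n} \<Longrightarrow> j\<in>{1..n} \<Longrightarrow> a i \<otimes>\<^bsub>G\<^esub> a j = a j \<otimes>\<^bsub>G\<^esub> a i"
    and bb: "\<And>i j. i\<in>{1..n} \<Longrightarrow> j\<in>{1..n} \<Longrightarrow> b i \<otimes>\<^bsub>G\<^esub> b j = b j \<otimes>\<^bsub>G\<^esub> b i"
    and acm: "\<And>i j. i\<in>{1..n} \<Longrightarrow> j\<in>{1..n-1} \<Longrightarrow> a i \<otimes>\<^bsub>G\<^esub> c j = c j \<otimes>\<^bsub>G\<^esub> a i"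
    and ab: "\<And>i j. i\<in>{1..n} \<Longrightarrow> j\<in>{1..n} \<Longrightarrow> i \<noteq> j \<Longrightarrow> a i \<otimes>\<^bsub>G\<^esub> b j = b j \<otimes>\<^bsub>G\<^esub> a i"
    and aba: "\<And>i. i\<in>{1..n} \<Longrightarrow> a i \<otimes>\<^bsub>G\<^esub> b i \<otimes>\<^bsub>G\<^esub> a i = b i \<otimes>\<^bsub>G\<^esub> a i \<otimes>\<^bsub>G\<^esub> b i"
    and bcb: "\<And>i j. i\<in>{1..n} \<Longrightarrow> j\<in>{1..n-1} \<Longrightarrow> (j = i \<or> j = i - 1) \<Longrightarrow>
         b i \<otimes>\<^bsub>G\<^esub> c j \<otimes>\<^bsub>G\<^esub> b i = c j \<otimes>\<^bsub>G\<^esub> b i \<otimes>\<^bsub>G\<^esub> c j"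
    using mc unfolding is_MC_generating_def by (auto simp: image_subset_iff)
  have step: "\<psi> (a i) = \<psi> (b i) \<and> \<psi> (b i) = \<psi> (c i) \<and> \<psi> (c i) = \<psi> (b (i+1)) \<and> \<psi> (b (i+1)) = \<psi> (a (i+1))"
    if i: "1 \<le> i" "i < n" for i
  proof -
    have I: "i \<in> {1..n}" "i+1 \<in> {1..n}" "i \<in> {1..n-1}" using i by auto
    show ?thesis
    proof (rule chain5)
      show "a i \<in> carrier G" "b i \<in> carrier G" "c i \<in> carrier G" "b (i+1) \<in> carrier G" "a (i+1) \<in> carrier G"
        using ac bc cc I by auto
      show "a i \<otimes>\<^bsub>G\<^esub> b i \<otimes>\<^bsub>G\<^esub> a i = b i \<otimes>\<^bsub>G\<^esub> a i \<otimes>\<^bsub>G\<^esub> b i" using aba I by auto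
      show "b i \<otimes>\<^bsub>G\<^esub> c i \<otimes>\<^bsub>G\<^esub> b i = c i \<otimes>\<^bsub>G\<^esub> b i \<otimes>\<^bsub>G\<^esub> c i" using bcb[of i i] I by auto
      show "c i \<otimes>\<^bsub>G\<^esub> b (i+1) \<otimes>\<^bsub>G\<^esub> c i = b (i+1) \<otimes>\<^bsub>G\<^esub> c i \<otimes>\<^bsub>G\<^esub> b (i+1)" using bcb[of "i+1" i] I by auto
      show "b (i+1) \<otimes>\<^bsub>G\<^esub> a (i+1) \<otimes>\<^bsub>G\<^esub> b (i+1) = a (i+1) \<otimes>\<^bsub>G\<^esub> b (i+1) \<otimes>\<^bsub>G\<^esub> a (i+1)" using aba[of "i+1"] I by auto
      show "a i \<otimes>\<^bsub>G\<^esub> c i = c i \<otimes>\<^bsub>G\<^esub> a i" using acm I by auto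
      show "a i \<otimes>\<^bsub>G\<^esub> b (i+1) = b (i+1) \<otimes>\<^bsub>G\<^esub> a i" using ab[of i "i+1"] I by auto
      show "a i \<otimes>\<^bsub>G\<^esub> a (i+1) = a (i+1) \<otimes>\<^bsub>G\<^esub> a i" using aa I by auto
      show "b i \<otimes>\<^bsub>G\<^esub> b (i+1) = b (i+1) \<otimes>\<^bsub>G\<^esub> b i" using bb I by auto
      show "b i \<otimes>\<^bsub>G\<^esub> a (i+1) = a (i+1) \<otimes>\<^bsub>G\<^esub> b i" using ab[of "i+1" i] I by auto
      show "c i \<otimes>\<^bsub>G\<^esub> a (i+1) = a (i+1) \<otimes>\<^bsub>G\<^esub> c i" using acm[of "i+1" i] I by auto
    qed
  qed
  define f0 where "f0 = \<psi> (a 1)"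
  have A: "\<psi> (a i) = f0" if "1 \<le> i" "i \<le> n" for i
    using that
  proof (induction i)
    case 0 thus ?case by simp
  next
    case (Suc k)
    show ?case
    proof (cases "k = 0")
      case True thus ?thesis by (simp add: f0_def)
    next
      case False
      hence "1 \<le> k" "k < n" using Suc.prems by auto
      thus ?thesis using step[of k] Suc.IH by auto
    qed
  qed
  have B: "\<psi> (b i) = f0" if "1 \<le> i" "i \<le> n" for i
  proof (cases "i < n")
    case True thus ?thesis using step[of i] A[of i] that by auto
  next
    case False
    hence "i = n" using that by auto
    moreover have "1 \<le> n - 1" "n - 1 < n" using assms(1) by auto
    ultimately show ?thesis using step[of "n-1"] A[of n] that assms(1) by auto
  qed
  have C: "\<psi> (c j) = f0" if "1 \<le> j" "j \<le> n - 1" for j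
    using step[of j] A[of j] that assms(1) by auto
  define gs where "gs = a ` {1..n} \<union> b ` {1..n} \<union> c ` {1..n-1}"
  have gsc: "gs \<subseteq> carrier G" using ac bc cc by (auto simp: gs_def)
  have gsf: "\<psi> h = f0" if "h \<in> gs" for h using that A B C by (auto simp: gs_def)
  have carr: "carrier G = generate G gs" using gen gs_def by simp
  have C1: "\<psi> g \<circ> f0 = f0 \<circ> \<psi> g" if "g \<in> generate G gs" for g
    using that
  proof (induction rule: generate.induct)
    case one thus ?case using F_one by simp
  next
    case (incl h) thus ?case using gsf by simp
  next
    case (inv h)
    have hc: "h \<in> carrier G" using inv gsc by auto
    have "\<psi> (inv\<^bsub>G\<^esub> h) (f0 x) = f0 (\<psi> (inv\<^bsub>G\<^esub> h) x)" for x
      using F_inv1[OF hc] F_inv2[OF hc] gsf[OF inv] by metis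
    thus ?case by (auto simp: fun_eq_iff)
  next
    case (eng h1 h2)
    have "h1 \<in> carrier G" "h2 \<in> carrier G" using eng carr by auto
    hence "\<psi> (h1 \<otimes>\<^bsub>G\<^esub> h2) = \<psi> h1 \<circ> \<psi> h2" using F_mult by simp
    thus ?case using eng.IH by (metis comp_assoc)
  qed
  have C2: "\<psi> g \<circ> \<psi> h = \<psi> h \<circ> \<psi> g" if g: "g \<in> carrier G" and h: "h \<in> generate G gs" for g h
    using h
  proof (induction rule: generate.induct)
    case one thus ?case using F_one by simp
  next
    case (incl h) thus ?case using gsf C1 g carr by simp
  next
    case (inv h)
    have hc: "h \<in> carrier G" using inv gsc by auto
    have cm: "\<psi> g (f0 y) = f0 (\<psi> g y)" for y using C1 g carr by (metis comp_apply)
    have "\<psi> g (\<psi> (inv\<^bsub>G\<^esub> h) x) = \<psi> (inv\<^bsub>G\<^esub> h) (\<psi> g x)" for x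
    proof -
      define y where "y = \<psi> (inv\<^bsub>G\<^esub> h) x"
      have x: "x = f0 y" using F_inv2[OF hc] gsf[OF inv] by (simp add: y_def)
      have "\<psi> (inv\<^bsub>G\<^esub> h) (\<psi> g x) = \<psi> (inv\<^bsub>G\<^esub> h) (f0 (\<psi> g y))" using cm x by simp
      also have "\<dots> = \<psi> g y" using F_inv1[OF hc] gsf[OF inv] by simp
      finally show ?thesis by (simp add: y_def)
    qed
    thus ?case by (auto simp: fun_eq_iff)
  next
    case (eng h1 h2)
    have "h1 \<in> carrier G" "h2 \<in> carrier G" using eng carr by auto
    hence "\<psi> (h1 \<otimes>\<^bsub>G\<^esub> h2) = \<psi> h1 \<circ> \<psi> h2" using F_mult by simp
    thus ?case using eng.IH by (metis comp_assoc)
  qed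
  show ?thesis using C2 carr by auto
qed

end
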